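(* There exists an asymptotically dense infinite discrete set $\Lambda\subset[0,+\infty)$ such that for any open set $G\subset\mathbb{R}$ one can select a function $f_G\in C_0^+(\mathbb{R})$ such that $D(f_G,\Lambda)=G$.
   Context: For a discrete set $\Lambda\subset[0,\infty)$ and measurable $f:\mathbb{R}\to[0,+\infty)$, put $s(x)=\sum_{\lambda\in\Lambda}f(x+\lambda)$ and $D(f,\Lambda)=\{x\in\mathbb{R}: s(x)=\infty\}$. An unbounded infinite discrete set $\Lambda=\{\lambda_1<\lambda_2<\cdots\}$ is asymptotically dense if $\lambda_n-\lambda_{n-1}\to0$, equivalently, for every $a>0$, $\#(\Lambda\cap[x,x+a])\to\infty$ as $x\to\infty$. $C_0^+(\mathbb{R})$ denotes the set of continuous functions $\mathbb{R}\to[0,+\infty)$ tending to $0$ at $+\infty$. *)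

theory Defs
  imports "HOL-Analysis.Analysis"
begin

definition discrete_nonneg_set :: "real set \<Rightarrow> bool" where
  "discrete_nonneg_set L \<longleftrightarrow> L \<subseteq> {0..} \<and> (\<forall>a b. finite (L \<inter> {a..b}))"

definition asymp_dense :: "real set \<Rightarrow> bool" where
  "asymp_dense L \<longleftrightarrow> infinite L \<and> \<not> bdd_above L \<and>
     (\<forall>a>0. filterlim (\<lambda>x. card (L \<inter> {x..x+a})) at_top at_top)"

definition shift_sum :: "(real \<Rightarrow> real) \<Rightarrow> real set \<Rightarrow> real \<Rightarrow> ennreal" where
  "shift_sum f L x = (\<Sum>\<^sub>\<infinity>l\<in>L. ennreal (f (x + l)))"

definition divset :: "(real \<Rightarrow> real) \<Rightarrow> real set \<Rightarrow> real set" where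
  "divset f L = {x. shift_sum f L x = top}"

definition C0_plus :: "(real \<Rightarrow> real) set" where
  "C0_plus = {f. continuous_on UNIV f \<and> (\<forall>x. f x \<ge> 0) \<and> (f \<longlongrightarrow> 0) at_top}"

end

theory Submission
  imports Defs
begin


definition aa :: "nat \<Rightarrow> real" where "aa m = real (4^(m+2))"
definition KK :: "nat \<Rightarrow> nat" where "KK m = m * 2^m * (2*4^(m+2))^4"
definition cc :: "nat \<Rightarrow> real" where "cc m = real m / real (KK m)"

lemma two_le_pow4: "2 * real m + 2 \<le> 4^(m+1)"
proof (induction m)
  case 0 then show ?case by simp
next
  case (Suc m) then show ?case by simp
qed

lemma aa_ge: "2 * real m + 2 \<le> aa m"
proof -
  have "(4::real)^(m+1) \<le> 4^(m+2)" by (rule power_increasing) auto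
  then show ?thesis using two_le_pow4[of m] by (simp add: aa_def)
qed

lemma aa_mono: "m < m' \<Longrightarrow> 4 * aa m \<le> aa m'"
proof -
  assume "m < m'"
  then have "(4::real)^(m+3) \<le> 4^(m'+2)" by (intro power_increasing) auto
  moreover have "4 * aa m = 4^(m+3)" by (simp add: aa_def power_add)
  moreover have "aa m' = 4^(m'+2)" by (simp add: aa_def)
  ultimately show ?thesis by simp
qed

lemma aa_sep: "m \<noteq> m' \<Longrightarrow> real m + real m' + 2 \<le> \<bar>aa m - aa m'\<bar>"
proof -
  have *: "real m + real m' + 2 \<le> aa m' - aa m" if "m < m'" for m m'
  proof -
    have "4 * aa m \<le> aa m'" using aa_mono[OF that] .
    moreover have "2 * real m' + 2 \<le> aa m'" by (rule aa_ge)
    moreover have "real m < real m'" using that by simp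
    moreover have "2 * real m + 2 \<le> aa m" by (rule aa_ge)
    ultimately show ?thesis by linarith
  qed
  assume "m \<noteq> m'"
  then show ?thesis using *[of m m'] *[of m' m] by (cases "m < m'") auto
qed

lemma aa_inj: "aa m = aa m' \<Longrightarrow> m = m'"
  using aa_sep[of m m'] by (cases "m = m'") auto

lemma aa_strict: "aa m \<le> aa m' \<Longrightarrow> m \<le> m'"
proof (rule ccontr)
  assume "aa m \<le> aa m'" "\<not> m \<le> m'"
  then have "4 * aa m' \<le> aa m" using aa_mono[of m' m] by simp
  moreover have "aa m' > 0" using aa_ge[of m'] by simp
  ultimately show False using \<open>aa m \<le> aa m'\<close> by simp
qed

lemma KK_real: "real (KK m) = real m * 2^m * (2 * aa m)^4"
  by (simp add: KK_def aa_def)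

lemma KK_pos: "m \<ge> 1 \<Longrightarrow> KK m \<ge> 1"
  by (simp add: KK_def)

lemma cc_KK: "m \<ge> 1 \<Longrightarrow> cc m * real (KK m) = real m"
  using KK_pos[of m] by (simp add: cc_def)

lemma cc_nonneg: "cc m \<ge> 0" by (simp add: cc_def)

lemma cc_le: "cc m \<le> (1/2)^m / (2 * aa m)^4"
proof (cases "m = 0")
  case True then show ?thesis by (simp add: cc_def KK_def)
next
  case False
  have "aa m > 0" using aa_ge[of m] by simp
  then show ?thesis using False by (simp add: cc_def KK_real field_simps)
qed

lemma KK_ge: "real (KK m) \<ge> real m"
proof -
  have "(1::real) \<le> 2^m * (2*aa m)^4"
  proof -
    have "1 \<le> aa m" using aa_ge[of m] by simp
    then have "1 \<le> (2 * aa m)^4" by (intro one_le_power) simp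
    moreover have "(1::real) \<le> 2^m" by simp
    ultimately show ?thesis by (metis mult_mono' one_le_numeral power_one_right mult_1 zero_le_one)
  qed
  then show ?thesis unfolding KK_real
    by (metis mult.assoc mult_le_cancel_left1 of_nat_0_le_iff order.trans linorder_not_le mult_le_cancel_left2 order_refl)
qed



definition chi :: "nat \<Rightarrow> real \<Rightarrow> real" where
  "chi m t = max 0 (min 1 (real m + 1 - \<bar>t\<bar>))"
definition pc :: "(real \<Rightarrow> real) \<Rightarrow> nat \<Rightarrow> real \<Rightarrow> real" where
  "pc \<phi> m y = cc m * \<phi> (y - aa m) * chi m (y - aa m)"
definition ff :: "(real \<Rightarrow> real) \<Rightarrow> real \<Rightarrow> real" where
  "ff \<phi> y = (\<Sum>m<nat \<lfloor>y\<rfloor> + 1. pc \<phi> m y)"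


lemma pc_zero: "real m + 1 \<le> \<bar>y - aa m\<bar> \<Longrightarrow> pc \<phi> m y = 0"
  by (simp add: pc_def chi_def)

lemma pc_zero_small: "y < real m \<Longrightarrow> pc \<phi> m y = 0"
  using aa_ge[of m] by (intro pc_zero) auto

lemma sum_cut: "y < real N \<Longrightarrow> (\<Sum>m<N. pc \<phi> m y) = (\<Sum>m\<in>{m. real m \<le> y}. pc \<phi> m y)"
proof -
  assume yN: "y < real N"
  have sub: "{m. real m \<le> y} \<subseteq> {..<N}" using yN by auto
  show ?thesis
    by (rule sum.mono_neutral_right) (use sub pc_zero_small in \<open>auto simp: not_le\<close>)
qed

lemma ff_eq: "y < real N \<Longrightarrow> ff \<phi> y = (\<Sum>m<N. pc \<phi> m y)"
proof -
  assume "y < real N"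
  moreover have "y < real (nat \<lfloor>y\<rfloor> + 1)" by linarith
  ultimately show ?thesis unfolding ff_def by (simp only: sum_cut)
qed

locale phi01 =
  fixes \<phi> :: "real \<Rightarrow> real"
  assumes ph0: "\<And>t. 0 \<le> \<phi> t" and ph1: "\<And>t. \<phi> t \<le> 1"
begin

lemma chi_01: "0 \<le> chi m t" "chi m t \<le> 1" by (auto simp: chi_def)

lemma pc_nonneg: "0 \<le> pc \<phi> m y"
  unfolding pc_def using cc_nonneg[of m] ph0 chi_01 by simp

lemma pc_le_cc: "pc \<phi> m y \<le> cc m"
proof -
  have "\<phi> (y - aa m) * chi m (y - aa m) \<le> 1"
    using ph0 ph1 chi_01 by (simp add: mult_le_one)
  then show ?thesis unfolding pc_def using cc_nonneg[of m]
    by (metis mult.assoc mult_left_le)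
qed

lemma ff_nonneg: "0 \<le> ff \<phi> y"
  unfolding ff_def by (intro sum_nonneg) (simp add: pc_nonneg)

lemma ff_ge_pc: "pc \<phi> m y \<le> ff \<phi> y"
proof -
  define N where "N = max (m+1) (nat \<lfloor>y\<rfloor> + 1)"
  have "y < real N" unfolding N_def by linarith
  then have "ff \<phi> y = (\<Sum>m<N. pc \<phi> m y)" by (rule ff_eq)
  moreover have "pc \<phi> m y \<le> (\<Sum>m<N. pc \<phi> m y)"
    by (rule member_le_sum) (auto simp: N_def pc_nonneg)
  ultimately show ?thesis by simp
qed

lemma ff_single: "\<bar>y - aa m\<bar> \<le> real m + 1 \<Longrightarrow> ff \<phi> y = pc \<phi> m y"
proof -
  assume ym: "\<bar>y - aa m\<bar> \<le> real m + 1"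
  define N where "N = max (m+1) (nat \<lfloor>y\<rfloor> + 1)"
  have "y < real N" unfolding N_def by linarith
  then have "ff \<phi> y = (\<Sum>m<N. pc \<phi> m y)" by (rule ff_eq)
  also have "\<dots> = (\<Sum>m'\<in>{m}. pc \<phi> m' y)"
  proof (rule sum.mono_neutral_right)
    show "\<forall>i\<in>{..<N} - {m}. pc \<phi> i y = 0"
    proof
      fix i assume "i \<in> {..<N} - {m}"
      then have "i \<noteq> m" by auto
      then have "real m + real i + 2 \<le> \<bar>aa m - aa i\<bar>" using aa_sep[of m i] by auto
      then have "real i + 1 \<le> \<bar>y - aa i\<bar>" using ym by linarith
      then show "pc \<phi> i y = 0" by (rule pc_zero)
    qed
  qed (auto simp: N_def)
  finally show ?thesis by simp
qed

lemma pc_bound_y: "y > 0 \<Longrightarrow> pc \<phi> m y \<le> (1/2)^m / y^4"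
proof (cases "pc \<phi> m y = 0")
  case True
  assume "y > 0"
  then show ?thesis using True by simp
next
  case False
  assume y0: "y > 0"
  have "\<bar>y - aa m\<bar> < real m + 1" using False pc_zero by force
  then have "y \<le> 2 * aa m" using aa_ge[of m] by linarith
  then have "y^4 \<le> (2 * aa m)^4" using y0 by (intro power_mono) auto
  then have "(1/2)^m / (2 * aa m)^4 \<le> (1/2)^m / y^4"
    using y0 aa_ge[of m] by (intro divide_left_mono) auto
  then show ?thesis using pc_le_cc[of m y] cc_le[of m] by linarith
qed

lemma ff_bound: "y > 0 \<Longrightarrow> ff \<phi> y \<le> 2 / y^4"
proof -
  assume y0: "y > 0"
  define N where "N = nat \<lfloor>y\<rfloor> + 1"
  have "ff \<phi> y = (\<Sum>m<N. pc \<phi> m y)" unfolding ff_def N_def ..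
  also have "\<dots> \<le> (\<Sum>m<N. (1/2)^m / y^4)"
    by (intro sum_mono pc_bound_y y0)
  also have "\<dots> = (\<Sum>m<N. (1/2::real)^m) / y^4" by (simp add: sum_divide_distrib)
  also have "\<dots> \<le> 2 / y^4"
  proof -
    have "(\<Sum>m<N. (1/2::real)^m) = (1 - (1/2)^N) / (1 - 1/2)" by (simp add: sum_gp_strict)
    also have "\<dots> \<le> 2" by simp
    finally show ?thesis using y0 by (intro divide_right_mono) auto
  qed
  finally show ?thesis .
qed

lemma ff_tendsto: "(ff \<phi> \<longlongrightarrow> 0) at_top"
proof (rule tendsto_sandwich[of "\<lambda>_. 0" _ _ "\<lambda>y. 2 / y^4"])
  show "\<forall>\<^sub>F y in at_top. 0 \<le> ff \<phi> y" by (simp add: ff_nonneg)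
  show "\<forall>\<^sub>F y in at_top. ff \<phi> y \<le> 2 / y^4"
    using eventually_gt_at_top[of "0::real"] by eventually_elim (rule ff_bound)
  show "((\<lambda>y::real. 2 / y^4) \<longlongrightarrow> 0) at_top" by real_asymp
qed simp

end

lemma ff_cont:
  assumes "continuous_on UNIV \<phi>"
  shows "continuous_on UNIV (ff \<phi>)"
proof -
  have pc_cont: "continuous_on UNIV (pc \<phi> m)" for m
  proof -
    have "continuous_on UNIV (\<lambda>y. \<phi> (y - aa m))"
      using assms by (intro continuous_on_compose2[OF assms]) (auto intro!: continuous_intros)
    moreover have "continuous_on UNIV (\<lambda>y. chi m (y - aa m))"
      unfolding chi_def by (intro continuous_intros)
    ultimately show ?thesis unfolding pc_def by (intro continuous_intros) auto
  qed
  have "isCont (ff \<phi>) y0" for y0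
  proof -
    define N where "N = nat \<lfloor>y0\<rfloor> + 1"
    have "y0 < real N" unfolding N_def by linarith
    have ev: "\<forall>\<^sub>F y in nhds y0. ff \<phi> y = (\<Sum>m<N. pc \<phi> m y)"
    proof -
      have "\<forall>\<^sub>F y in nhds y0. y \<in> {..<real N}"
        using \<open>y0 < real N\<close> by (intro eventually_nhds_in_open) auto
      then show ?thesis by eventually_elim (simp add: ff_eq)
    qed
    have "isCont (\<lambda>y. \<Sum>m<N. pc \<phi> m y) y0"
      using pc_cont by (intro isCont_sum) (simp add: continuous_on_eq_continuous_at)
    then show ?thesis using isCont_cong[OF ev] by simp
  qed
  then show ?thesis by (intro continuous_at_imp_continuous_on) auto
qed



definition clus :: "nat \<Rightarrow> real set" where
  "clus m = (\<lambda>j. aa m + real j / real (KK m)^2) ` {..<KK m}"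
definition FF :: "real set" where "FF = range (\<lambda>k::nat. sqrt (real k))"
definition Lam :: "real set" where "Lam = FF \<union> (\<Union>m. clus m)"

lemma clus_pt:
  assumes "j < KK m"
  shows "real j / real (KK m)^2 < 1 / real (KK m)" "0 \<le> real j / real (KK m)^2"
    "1 / real (KK m) \<le> 1"
proof -
  have K: "real (KK m) \<ge> 1" using assms by simp
  have "real j < real (KK m)" using assms by simp
  then have "real j / real (KK m)^2 < real (KK m) / real (KK m)^2"
    using K by (intro divide_strict_right_mono) auto
  also have "\<dots> = 1 / real (KK m)" using K by (simp add: power2_eq_square)
  finally show "real j / real (KK m)^2 < 1 / real (KK m)" .
  show "0 \<le> real j / real (KK m)^2" by simp
  show "1 / real (KK m) \<le> 1" using K by simp
qed

lemma clus_sub: "l \<in> clus m \<Longrightarrow> aa m \<le> l \<and> l < aa m + 1 / real (KK m) \<and> l < aa m + 1"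
proof -
  assume "l \<in> clus m"
  then obtain j where j: "j < KK m" "l = aa m + real j / real (KK m)^2" unfolding clus_def by auto
  show ?thesis using clus_pt[OF j(1)] j(2) by linarith
qed

lemma FF_nonneg: "l \<in> FF \<Longrightarrow> 0 \<le> l" by (auto simp: FF_def)

lemma Lam_nonneg: "Lam \<subseteq> {0..}"
proof
  fix l assume "l \<in> Lam"
  then show "l \<in> {0..}"
  proof (cases "l \<in> FF")
    case False
    then obtain m where "l \<in> clus m" using \<open>l \<in> Lam\<close> by (auto simp: Lam_def)
    then have "aa m \<le> l" using clus_sub[of l m] by blast
    moreover have "0 \<le> aa m" using aa_ge[of m] by linarith
    ultimately show ?thesis by simp
  qed (simp add: FF_nonneg)
qed

lemma finite_clus: "finite (clus m)" by (simp add: clus_def)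

lemma finite_Lam: "finite (Lam \<inter> {a..b})"
proof -
  have "FF \<inter> {a..b} \<subseteq> (\<lambda>k::nat. sqrt (real k)) ` {..nat \<lceil>b^2\<rceil>}"
  proof
    fix l assume "l \<in> FF \<inter> {a..b}"
    then obtain k where k: "l = sqrt (real k)" "sqrt (real k) \<le> b" by (auto simp: FF_def)
    then have "real k \<le> b^2" using real_le_rsqrt sqrt_le_D by blast
    then have "k \<le> nat \<lceil>b^2\<rceil>" by linarith
    then show "l \<in> (\<lambda>k::nat. sqrt (real k)) ` {..nat \<lceil>b^2\<rceil>}" using k by auto
  qed
  then have f1: "finite (FF \<inter> {a..b})" by (rule finite_subset) auto
  have "(\<Union>m. clus m) \<inter> {a..b} \<subseteq> (\<Union>m\<in>{..nat \<lceil>b\<rceil>}. clus m)"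
  proof
    fix l assume "l \<in> (\<Union>m. clus m) \<inter> {a..b}"
    then obtain m where m: "l \<in> clus m" "l \<le> b" by auto
    then have "real m \<le> b" using clus_sub[of l m] aa_ge[of m] by linarith
    then have "m \<le> nat \<lceil>b\<rceil>" by linarith
    then show "l \<in> (\<Union>m\<in>{..nat \<lceil>b\<rceil>}. clus m)" using m by auto
  qed
  then have f2: "finite ((\<Union>m. clus m) \<inter> {a..b})" by (rule finite_subset) (auto simp: finite_clus)
  have "Lam \<inter> {a..b} = (FF \<inter> {a..b}) \<union> ((\<Union>m. clus m) \<inter> {a..b})" by (auto simp: Lam_def)
  then show ?thesis using f1 f2 by simp
qed

lemma discrete_Lam: "discrete_nonneg_set Lam"
  unfolding discrete_nonneg_set_def using Lam_nonneg finite_Lam by blast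

lemma inj_sqrt_nat: "inj (\<lambda>k::nat. sqrt (real k))"
  by (auto simp: inj_def)

lemma card_lower:
  assumes x0: "x \<ge> 0" and a0: "a > 0"
  shows "2 * a * x - 1 \<le> real (card (Lam \<inter> {x..x+a}))"
proof -
  define lo where "lo = nat \<lceil>x^2\<rceil>"
  define hi where "hi = nat \<lfloor>(x+a)^2\<rfloor>"
  have sub: "(\<lambda>k::nat. sqrt (real k)) ` {lo..hi} \<subseteq> Lam \<inter> {x..x+a}"
  proof
    fix l assume "l \<in> (\<lambda>k::nat. sqrt (real k)) ` {lo..hi}"
    then obtain k where k: "l = sqrt (real k)" "lo \<le> k" "k \<le> hi" by auto
    have "x^2 \<le> real k" using k(2) unfolding lo_def by linarith
    then have "x \<le> l" using k(1) x0 real_le_rsqrt by blast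
    have "real hi \<le> (x+a)^2" unfolding hi_def using of_int_floor_le[of "(x+a)^2"] by simp
    then have "real k \<le> (x+a)^2" using k(3) by (meson of_nat_le_iff order.trans)
    then have "l \<le> x + a" using k(1) x0 a0 real_sqrt_le_iff[of "real k" "(x+a)^2"] by simp
    show "l \<in> Lam \<inter> {x..x+a}" using k \<open>x \<le> l\<close> \<open>l \<le> x+a\<close> by (auto simp: Lam_def FF_def)
  qed
  have "card ((\<lambda>k::nat. sqrt (real k)) ` {lo..hi}) = card {lo..hi}"
    using inj_sqrt_nat by (intro card_image) (auto simp: inj_on_def)
  also have "card {lo..hi} = Suc hi - lo" by simp
  finally have "Suc hi - lo \<le> card (Lam \<inter> {x..x+a})"
    using card_mono[OF finite_Lam sub] by simp
  moreover have "2 * a * x - 1 \<le> real (Suc hi - lo)"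
  proof -
    have "(x+a)^2 - 1 < real hi"
    proof -
      have "0 \<le> (x+a)^2" by simp
      then have "real hi = of_int \<lfloor>(x+a)^2\<rfloor>" unfolding hi_def by simp
      then show ?thesis using floor_correct[of "(x+a)^2"] by linarith
    qed
    moreover have "real lo < x^2 + 1"
    proof -
      have "0 \<le> x^2" by simp
      then have "real lo = of_int \<lceil>x^2\<rceil>" unfolding lo_def by simp
      then show ?thesis using ceiling_correct[of "x^2"] by linarith
    qed
    moreover have "real (Suc hi) - real lo \<le> real (Suc hi - lo)"
      by (cases "lo \<le> Suc hi") (auto simp: of_nat_diff)
    moreover have "(x+a)^2 = x^2 + 2*a*x + a^2" by (simp add: power2_eq_square algebra_simps)
    moreover have "a^2 \<ge> 0" by simp
    ultimately show ?thesis by linarith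
  qed
  ultimately show ?thesis by linarith
qed

lemma dense_Lam: "asymp_dense Lam"
  unfolding asymp_dense_def
proof (intro conjI allI impI)
  have "infinite FF" unfolding FF_def using inj_sqrt_nat by (simp add: range_inj_infinite)
  then show "infinite Lam" unfolding Lam_def by auto
  show "\<not> bdd_above Lam"
  proof
    assume "bdd_above Lam"
    then obtain B where B: "\<And>l. l \<in> Lam \<Longrightarrow> l \<le> B" by (auto simp: bdd_above_def)
    define k where "k = nat \<lceil>B^2\<rceil> + 1"
    have "sqrt (real k) \<in> Lam" by (auto simp: Lam_def FF_def)
    then have "sqrt (real k) \<le> B" by (rule B)
    moreover have "B^2 < real k" unfolding k_def by linarith
    then have "\<bar>B\<bar> < sqrt (real k)" using real_less_rsqrt[of "\<bar>B\<bar>" "real k"] by simp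
    ultimately show False by linarith
  qed
  fix a :: real assume a0: "0 < a"
  show "filterlim (\<lambda>x. card (Lam \<inter> {x..x + a})) at_top at_top"
    unfolding filterlim_at_top
  proof
    fix Z :: nat
    show "\<forall>\<^sub>F x in at_top. Z \<le> card (Lam \<inter> {x..x + a})"
      using eventually_ge_at_top[of "(real Z + 1) / (2*a)"]
    proof eventually_elim
      case (elim x)
      have "0 \<le> (real Z + 1) / (2*a)" using a0 by simp
      then have x0: "x \<ge> 0" using elim by linarith
      have "real Z + 1 \<le> x * (2 * a)" using elim a0 by (simp add: pos_divide_le_eq)
      then have "real Z \<le> real (card (Lam \<inter> {x..x + a}))" using card_lower[OF x0 a0] by (simp add: algebra_simps)
      then show ?case by (simp only: of_nat_le_iff)
    qed
  qed
qed



definition phiG :: "real set \<Rightarrow> real \<Rightarrow> real" where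
  "phiG G t = (if G = UNIV then 1 else min 1 (infdist t (- G)))"

lemma phiG_01: "0 \<le> phiG G t" "phiG G t \<le> 1"
  by (auto simp: phiG_def infdist_nonneg)

lemma phiG_lip: "\<bar>phiG G s - phiG G t\<bar> \<le> \<bar>s - t\<bar>"
proof (cases "G = UNIV")
  case False
  have "\<bar>infdist s (- G) - infdist t (- G)\<bar> \<le> dist s t" by (rule infdist_triangle_abs)
  then have "\<bar>min 1 (infdist s (- G)) - min 1 (infdist t (- G))\<bar> \<le> \<bar>s - t\<bar>"
    by (simp add: dist_real_def)
  then show ?thesis using False by (simp add: phiG_def)
qed (simp add: phiG_def)

lemma phiG_cont: "continuous_on UNIV (phiG G)"
proof (cases "G = UNIV")
  case True then show ?thesis by (simp add: phiG_def)
next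
  case False
  then have eq: "phiG G = (\<lambda>t. min 1 (infdist t (- G)))" by (intro ext) (simp add: phiG_def)
  have "continuous_on UNIV (\<lambda>t. min 1 (infdist t (- G)))" by (intro continuous_intros)
  then show ?thesis using eq by simp
qed

lemma phiG_pos: "open G \<Longrightarrow> t \<in> G \<Longrightarrow> 0 < phiG G t"
proof (cases "G = UNIV")
  case False
  assume "open G" "t \<in> G"
  have "closed (- G)" using \<open>open G\<close> by (simp add: closed_Compl)
  moreover have "- G \<noteq> {}" using False by auto
  moreover have "t \<notin> - G" using \<open>t \<in> G\<close> by simp
  ultimately have "infdist t (- G) > 0" by (rule infdist_pos_not_in_closed)
  then show ?thesis using False by (simp add: phiG_def)
qed (simp add: phiG_def)

lemma phiG_zero: "t \<notin> G \<Longrightarrow> phiG G t = 0"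
proof -
  assume "t \<notin> G"
  then have "G \<noteq> UNIV" "t \<in> - G" by auto
  then show ?thesis by (simp add: phiG_def)
qed

interpretation pG: phi01 "phiG G"
  by unfold_locales (rule phiG_01)+

lemma infsum_ge_finite:
  fixes h :: "real \<Rightarrow> real"
  assumes "finite A" "A \<subseteq> L" "\<And>y. y \<in> L \<Longrightarrow> 0 \<le> h y"
  shows "ennreal (sum h A) \<le> (\<Sum>\<^sub>\<infinity>y\<in>L. ennreal (h y))"
proof -
  have "(\<Sum>\<^sub>\<infinity>y\<in>L. ennreal (h y)) = (SUP F\<in>{F. finite F \<and> F\<subseteq>L}. sum (\<lambda>y. ennreal (h y)) F)"
    by (rule nonneg_infsum_complete) simp
  moreover have "sum (\<lambda>y. ennreal (h y)) A = ennreal (sum h A)"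
    using assms by (intro sum_ennreal) auto
  moreover have "sum (\<lambda>y. ennreal (h y)) A \<le> (SUP F\<in>{F. finite F \<and> F\<subseteq>L}. sum (\<lambda>y. ennreal (h y)) F)"
    using assms by (intro SUP_upper) auto
  ultimately show ?thesis by simp
qed

lemma infsum_fin:
  fixes h :: "real \<Rightarrow> real" and L :: "real set" and b :: "nat \<Rightarrow> real"
  assumes L0: "L \<subseteq> {0..}" and Lfin: "\<And>a c. finite (L \<inter> {a..c})"
    and h0: "\<And>y. y \<in> L \<Longrightarrow> 0 \<le> h y"
    and sb: "summable b" and b0: "\<And>n. 0 \<le> b n"
    and bnd: "\<And>n. n \<ge> N \<Longrightarrow> (\<Sum>y\<in>L \<inter> {real n..<real n+1}. h y) \<le> b n"
  shows "(\<Sum>\<^sub>\<infinity>y\<in>L. ennreal (h y)) \<noteq> top"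
proof -
  define S where "S n = (\<Sum>y\<in>L \<inter> {real n..<real n+1}. h y)" for n
  have finI: "finite (L \<inter> {a..<c})" for a c
    by (rule finite_subset[OF _ Lfin[of a c]]) auto
  have S0: "0 \<le> S n" for n unfolding S_def using h0 by (intro sum_nonneg) auto
  have split: "(\<Sum>y\<in>L \<inter> {0..<real M}. h y) = (\<Sum>n<M. S n)" for M
  proof (induction M)
    case 0 then show ?case by simp
  next
    case (Suc M)
    have "L \<inter> {0..<real (Suc M)} = (L \<inter> {0..<real M}) \<union> (L \<inter> {real M..<real M+1})"
      by auto
    moreover have "(L \<inter> {0..<real M}) \<inter> (L \<inter> {real M..<real M+1}) = {}" by auto
    ultimately have "(\<Sum>y\<in>L \<inter> {0..<real (Suc M)}. h y) =
        (\<Sum>y\<in>L \<inter> {0..<real M}. h y) + (\<Sum>y\<in>L \<inter> {real M..<real M+1}. h y)"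
      using finI by (simp add: sum.union_disjoint)
    then show ?case using Suc by (simp add: S_def)
  qed
  define B where "B = (\<Sum>n<N. S n) + suminf b"
  have partial: "(\<Sum>n<M. S n) \<le> B" for M
  proof -
    have "(\<Sum>n<M. S n) \<le> (\<Sum>n<N. S n) + (\<Sum>n\<in>{N..<M}. S n)"
    proof (cases "M \<le> N")
      case True
      then have "(\<Sum>n<M. S n) \<le> (\<Sum>n<N. S n)" using S0 by (intro sum_mono2) auto
      moreover have "(\<Sum>n\<in>{N..<M}. S n) = 0" using True by simp
      ultimately show ?thesis by simp
    next
      case False
      then have "{..<M} = {..<N} \<union> {N..<M}" by auto
      moreover have "{..<N} \<inter> {N..<M} = {}" by auto
      ultimately show ?thesis by (simp add: sum.union_disjoint)
    qed
    also have "(\<Sum>n\<in>{N..<M}. S n) \<le> (\<Sum>n\<in>{N..<M}. b n)"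
      by (intro sum_mono) (auto simp: S_def intro!: bnd)
    also have "(\<Sum>n\<in>{N..<M}. b n) \<le> (\<Sum>n<M. b n)" using b0 by (intro sum_mono2) auto
    also have "(\<Sum>n<M. b n) \<le> suminf b" using sb b0 by (intro sum_le_suminf) auto
    finally show ?thesis unfolding B_def by simp
  qed
  have "(\<Sum>\<^sub>\<infinity>y\<in>L. ennreal (h y)) = (SUP F\<in>{F. finite F \<and> F\<subseteq>L}. sum (\<lambda>y. ennreal (h y)) F)"
    by (rule nonneg_infsum_complete) simp
  also have "\<dots> \<le> ennreal B"
  proof (rule SUP_least)
    fix F assume F: "F \<in> {F. finite F \<and> F \<subseteq> L}"
    then have "finite F" "F \<subseteq> L" by auto
    obtain c where c: "\<And>y. y \<in> F \<Longrightarrow> y \<le> c"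
      using \<open>finite F\<close> bdd_above_finite[of F] by (auto simp: bdd_above_def)
    define M where "M = nat \<lceil>c\<rceil> + 1"
    have FM: "F \<subseteq> L \<inter> {0..<real M}"
    proof
      fix y assume "y \<in> F"
      then have "y \<in> L" "y \<le> c" using \<open>F \<subseteq> L\<close> c by auto
      moreover have "c < real M" unfolding M_def by linarith
      ultimately show "y \<in> L \<inter> {0..<real M}" using L0 by auto
    qed
    have "sum (\<lambda>y. ennreal (h y)) F = ennreal (sum h F)"
      using \<open>F \<subseteq> L\<close> h0 by (intro sum_ennreal) auto
    also have "sum h F \<le> (\<Sum>y\<in>L \<inter> {0..<real M}. h y)"
      using FM h0 finI by (intro sum_mono2) auto
    also have "\<dots> \<le> B" using split partial by simp
    finally show "sum (\<lambda>y. ennreal (h y)) F \<le> ennreal B" by (simp add: ennreal_leI)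
  qed
  finally show ?thesis using top_neq_ennreal by (metis neq_top_trans)
qed



lemma clus_card: "card (clus m) = KK m"
proof -
  have "inj_on (\<lambda>j. aa m + real j / real (KK m)^2) {..<KK m}"
  proof (rule inj_onI)
    fix i j assume "i \<in> {..<KK m}" "j \<in> {..<KK m}"
      and eq: "aa m + real i / real (KK m)^2 = aa m + real j / real (KK m)^2"
    then have "KK m > 0" by auto
    then show "i = j" using eq by (simp add: field_simps)
  qed
  then show ?thesis unfolding clus_def by (simp add: card_image)
qed

lemma clus_K: "l \<in> clus m \<Longrightarrow> real (KK m) \<ge> 1"
  unfolding clus_def by auto

lemma ff_clus_upper:
  assumes "x \<notin> G" "\<bar>x\<bar> \<le> real m" "l \<in> clus m"
  shows "ff (phiG G) (x + l) \<le> cc m / real (KK m)"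
proof -
  define e where "e = l - aa m"
  have e: "0 \<le> e" "e < 1 / real (KK m)" "e < 1" using clus_sub[OF assms(3)] by (auto simp: e_def)
  have K: "real (KK m) \<ge> 1" using clus_K[OF assms(3)] .
  have "\<bar>x + l - aa m\<bar> \<le> real m + 1" using e assms(2) unfolding e_def by linarith
  then have "ff (phiG G) (x + l) = pc (phiG G) m (x + l)" by (rule pG.ff_single)
  also have "\<dots> = cc m * phiG G (x + e) * chi m (x + e)" unfolding pc_def e_def
    by (simp add: algebra_simps)
  also have "\<dots> \<le> cc m * phiG G (x + e)"
    using cc_nonneg[of m] phiG_01[of G] pG.chi_01[of m] by (simp add: mult_left_le)
  also have "phiG G (x + e) \<le> e"
    using phiG_lip[of G "x + e" x] phiG_zero[OF assms(1)] e by simp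
  then have "cc m * phiG G (x + e) \<le> cc m * (1 / real (KK m))"
    using e cc_nonneg[of m] by (intro mult_left_mono) auto
  finally show ?thesis by simp
qed

lemma ff_clus_lower:
  assumes "\<bar>x\<bar> + 1 \<le> real m" "l \<in> clus m"
  shows "cc m * (phiG G x - 1 / real (KK m)) \<le> ff (phiG G) (x + l)"
proof -
  define e where "e = l - aa m"
  have e: "0 \<le> e" "e < 1 / real (KK m)" "e < 1" using clus_sub[OF assms(2)] by (auto simp: e_def)
  have "chi m (x + e) = 1" unfolding chi_def using e assms(1) by auto
  then have "pc (phiG G) m (x + l) = cc m * phiG G (x + e)" unfolding pc_def e_def
    by (simp add: algebra_simps)
  moreover have "phiG G x - 1 / real (KK m) \<le> phiG G (x + e)"
    using phiG_lip[of G "x + e" x] e by linarith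
  ultimately have "cc m * (phiG G x - 1 / real (KK m)) \<le> pc (phiG G) m (x + l)"
    using cc_nonneg[of m] by (simp add: mult_left_mono)
  also have "\<dots> \<le> ff (phiG G) (x + l)" by (rule pG.ff_ge_pc)
  finally show ?thesis .
qed

lemma shift_in_G:
  assumes "open G" "x \<in> G"
  shows "shift_sum (ff (phiG G)) Lam x = top"
proof (rule ccontr)
  define p where "p = phiG G x"
  have p0: "p > 0" using phiG_pos[OF assms] by (simp add: p_def)
  assume "shift_sum (ff (phiG G)) Lam x \<noteq> top"
  then have "shift_sum (ff (phiG G)) Lam x < top" by (simp add: top.not_eq_extremum)
  then obtain n :: nat where n: "shift_sum (ff (phiG G)) Lam x < of_nat n"
    using ennreal_Ex_less_of_nat by blast
  define m where "m = nat \<lceil>\<bar>x\<bar> + 1 + 2 / p + 2 * real n / p\<rceil>"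
  have zm: "\<bar>x\<bar> + 1 + 2 / p + 2 * real n / p \<le> real m"
    unfolding m_def by (rule real_nat_ceiling_ge)
  have "0 \<le> 2 / p" "0 \<le> 2 * real n / p" using p0 by auto
  then have m1: "\<bar>x\<bar> + 1 \<le> real m" and m2: "2 / p \<le> real m" and m3: "2 * real n / p \<le> real m"
    using zm by linarith+
  have mpos: "m \<ge> 1" using m1 by linarith
  have K: "real m \<le> real (KK m)" by (rule KK_ge)
  have Kinv: "1 / real (KK m) \<le> p / 2"
  proof -
    have "2 / p \<le> real (KK m)" using m2 K by linarith
    moreover have "real (KK m) > 0" using KK_pos[OF mpos] by simp
    ultimately show ?thesis using p0 by (simp add: field_simps)
  qed
  have low: "\<forall>l\<in>clus m. cc m * (p / 2) \<le> ff (phiG G) (x + l)"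
  proof
    fix l assume "l \<in> clus m"
    have "cc m * (p / 2) \<le> cc m * (p - 1 / real (KK m))"
      using Kinv cc_nonneg[of m] by (intro mult_left_mono) auto
    also have "\<dots> \<le> ff (phiG G) (x + l)" using ff_clus_lower[OF m1 \<open>l \<in> clus m\<close>] by (simp add: p_def)
    finally show "cc m * (p / 2) \<le> ff (phiG G) (x + l)" .
  qed
  have "real (card (clus m)) * (cc m * (p / 2)) \<le> (\<Sum>l\<in>clus m. ff (phiG G) (x + l))"
    using sum_bounded_below[of "clus m" "cc m * (p / 2)" "\<lambda>l. ff (phiG G) (x + l)"] low by simp
  moreover have "real (card (clus m)) * (cc m * (p / 2)) = real m * p / 2"
    using cc_KK[OF mpos] by (simp add: clus_card algebra_simps)
  moreover have "real n \<le> real m * p / 2" using m3 p0 by (simp add: field_simps)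
  ultimately have "real n \<le> (\<Sum>l\<in>clus m. ff (phiG G) (x + l))" by linarith
  then have "ennreal (real n) \<le> ennreal (\<Sum>l\<in>clus m. ff (phiG G) (x + l))" by (rule ennreal_leI)
  also have "\<dots> \<le> shift_sum (ff (phiG G)) Lam x"
    unfolding shift_sum_def
    by (rule infsum_ge_finite) (auto simp: finite_clus Lam_def pG.ff_nonneg)
  finally have "of_nat n \<le> shift_sum (ff (phiG G)) Lam x" by (simp add: ennreal_of_nat_eq_real_of_nat)
  then show False using n by simp
qed



lemma aa_unit:
  assumes "aa m \<le> l" "l < aa m + 1" "real n \<le> l" "l < real n + 1"
  shows "aa m = real n"
proof -
  define q :: nat where "q = 4^(m+2)"
  have aq: "aa m = real q" unfolding aa_def q_def ..
  have "real q < real (n + 1)" using assms aq by simp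
  then have "q < n + 1" by (simp only: of_nat_less_iff)
  moreover have "real n < real (q + 1)" using assms aq by simp
  then have "n < q + 1" by (simp only: of_nat_less_iff)
  ultimately show ?thesis using aq by simp
qed

lemma card_FF_unit: "card (FF \<inter> {real n..<real n+1}) \<le> 2 * n + 1"
proof -
  have "FF \<inter> {real n..<real n+1} \<subseteq> (\<lambda>k::nat. sqrt (real k)) ` {n^2..<(n+1)^2}"
  proof
    fix l assume "l \<in> FF \<inter> {real n..<real n+1}"
    then obtain k :: nat where k: "l = sqrt (real k)" "real n \<le> sqrt (real k)" "sqrt (real k) < real n + 1"
      by (auto simp: FF_def)
    have "(real n)^2 \<le> (sqrt (real k))^2" using k(2) by (intro power_mono) auto
    then have "(real n)^2 \<le> real k" by simp
    then have "real (n^2) \<le> real k" by simp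
    then have "n^2 \<le> k" by (simp only: of_nat_le_iff)
    have "(sqrt (real k))^2 < (real n + 1)^2" using k(3) by (intro power_strict_mono) auto
    then have "real k < (real n + 1)^2" by simp
    then have "real k < real ((n+1)^2)" by (simp add: add.commute)
    then have "k < (n+1)^2" by (simp only: of_nat_less_iff)
    then show "l \<in> (\<lambda>k::nat. sqrt (real k)) ` {n^2..<(n+1)^2}" using k(1) \<open>n^2 \<le> k\<close> by auto
  qed
  then have "card (FF \<inter> {real n..<real n+1}) \<le> card ((\<lambda>k::nat. sqrt (real k)) ` {n^2..<(n+1)^2})"
    by (intro card_mono) auto
  also have "\<dots> \<le> card {n^2..<(n+1)^2}" by (rule card_image_le) simp
  also have "\<dots> = 2 * n + 1" by (simp add: power2_eq_square algebra_simps)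
  finally show ?thesis .
qed

lemma shift_notin_G:
  assumes "x \<notin> G"
  shows "shift_sum (ff (phiG G)) Lam x \<noteq> top"
proof -
  define f where "f = ff (phiG G)"
  define k where "k = nat \<lceil>\<bar>x\<bar>\<rceil>"
  define N where "N = nat \<lceil>aa k\<rceil> + nat \<lceil>2 * \<bar>x\<bar>\<rceil> + 1"
  define b where "b n = 97 * inverse (real n ^ 3)" for n
  have sb: "summable b" unfolding b_def
    by (intro summable_mult inverse_power_summable) auto
  have b0: "0 \<le> b n" for n unfolding b_def by simp
  have bnd: "(\<Sum>y\<in>Lam \<inter> {real n..<real n+1}. f (x + y)) \<le> b n" if nN: "n \<ge> N" for n
  proof -
    have n1: "1 \<le> real n" using nN unfolding N_def by simp
    have n2: "2 * \<bar>x\<bar> \<le> real n"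
    proof -
      have "2 * \<bar>x\<bar> \<le> real (nat \<lceil>2 * \<bar>x\<bar>\<rceil>)" by (rule real_nat_ceiling_ge)
      moreover have "nat \<lceil>2 * \<bar>x\<bar>\<rceil> \<le> n" using nN unfolding N_def by linarith
      ultimately show ?thesis by (meson of_nat_le_iff order.trans)
    qed
    have n3: "aa k \<le> real n"
    proof -
      have "aa k \<le> real (nat \<lceil>aa k\<rceil>)" by (rule real_nat_ceiling_ge)
      moreover have "nat \<lceil>aa k\<rceil> \<le> n" using nN unfolding N_def by linarith
      ultimately show ?thesis by (meson of_nat_le_iff order.trans)
    qed
    define Ln where "Ln = Lam \<inter> {real n..<real n+1}"
    define Fn where "Fn = FF \<inter> {real n..<real n+1}"
    define Cn where "Cn = Ln - FF"
    have finLn: "finite Ln" unfolding Ln_def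
      by (rule finite_subset[OF _ finite_Lam[of "real n" "real n + 1"]]) auto
    have LnU: "Ln = Fn \<union> Cn" "Fn \<inter> Cn = {}" unfolding Ln_def Fn_def Cn_def Lam_def by auto
    have finFn: "finite Fn" "finite Cn" using finLn LnU by auto
    have sum_split: "(\<Sum>y\<in>Ln. f (x + y)) = (\<Sum>y\<in>Fn. f (x + y)) + (\<Sum>y\<in>Cn. f (x + y))"
      using LnU finFn by (simp add: sum.union_disjoint)
    have termF: "f (x + y) \<le> 32 / (real n)^4" if "y \<in> Fn" for y
    proof -
      have "real n \<le> y" using that unfolding Fn_def by auto
      then have y2: "real n / 2 \<le> x + y" using n2 by linarith
      have pos: "0 < real n / 2" using n1 by simp
      then have "f (x + y) \<le> 2 / (x + y)^4" unfolding f_def using y2 by (intro pG.ff_bound) linarith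
      also have "\<dots> \<le> 2 / (real n / 2)^4"
      proof (rule frac_le)
        show "(real n / 2)^4 \<le> (x + y)^4" using y2 pos by (intro power_mono) auto
      qed (use pos in auto)
      also have "\<dots> = 32 / (real n)^4" by (simp add: field_simps)
      finally show ?thesis .
    qed
    have sF: "(\<Sum>y\<in>Fn. f (x + y)) \<le> 96 / (real n)^3"
    proof -
      have "(\<Sum>y\<in>Fn. f (x + y)) \<le> real (card Fn) * (32 / (real n)^4)"
        using termF by (rule sum_bounded_above)
      also have "\<dots> \<le> real (2 * n + 1) * (32 / (real n)^4)"
        using card_FF_unit[of n] unfolding Fn_def by (intro mult_right_mono) auto
      also have "\<dots> \<le> (3 * real n) * (32 / (real n)^4)"
        using n1 by (intro mult_right_mono) auto
      also have "\<dots> = 96 / (real n)^3" using n1 by (simp add: field_simps eval_nat_numeral)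
      finally show ?thesis .
    qed
    have sC: "(\<Sum>y\<in>Cn. f (x + y)) \<le> 1 / (real n)^3"
    proof (cases "Cn = {}")
      case True
      then show ?thesis by simp
    next
      case False
      then obtain l0 where l0: "l0 \<in> Cn" by auto
      then obtain m where m: "l0 \<in> clus m" unfolding Cn_def Ln_def Lam_def by auto
      have l0n: "real n \<le> l0" "l0 < real n + 1" using l0 unfolding Cn_def Ln_def by auto
      have amn: "aa m = real n" using clus_sub[OF m] l0n by (intro aa_unit[of m l0]) auto
      have CC: "Cn \<subseteq> clus m"
      proof
        fix l assume "l \<in> Cn"
        then obtain m' where m': "l \<in> clus m'" and ln: "real n \<le> l" "l < real n + 1"
          unfolding Cn_def Ln_def Lam_def by auto
        have "aa m' = real n" using clus_sub[OF m'] ln by (intro aa_unit[of m' l]) auto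
        then have "m' = m" using amn aa_inj by metis
        then show "l \<in> clus m" using m' by simp
      qed
      have "k \<le> m" using n3 amn aa_strict by metis
      then have xm: "\<bar>x\<bar> \<le> real m" unfolding k_def by linarith
      have "(\<Sum>y\<in>Cn. f (x + y)) \<le> (\<Sum>y\<in>clus m. f (x + y))"
        using CC unfolding f_def by (intro sum_mono2 finite_clus) (auto simp: pG.ff_nonneg)
      also have "\<dots> \<le> real (card (clus m)) * (cc m / real (KK m))"
        using ff_clus_upper[OF assms xm] unfolding f_def by (intro sum_bounded_above) auto
      also have "\<dots> = cc m" using clus_K[OF m] by (simp add: clus_card)
      also have "\<dots> \<le> (1/2)^m / (2 * aa m)^4" by (rule cc_le)
      also have "\<dots> \<le> 1 / (real n)^4"
      proof -
        have "(1/2::real)^m \<le> 1" by (simp add: power_le_one)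
        moreover have "(real n)^4 \<le> (2 * aa m)^4" using amn n1 by (intro power_mono) auto
        moreover have "0 < (real n)^4" using n1 by simp
        ultimately show ?thesis by (intro frac_le) auto
      qed
      also have "\<dots> \<le> 1 / (real n)^3"
      proof (rule frac_le)
        show "(real n)^3 \<le> (real n)^4" using n1 by (intro power_increasing) auto
      qed (use n1 in auto)
      finally show ?thesis .
    qed
    have "(\<Sum>y\<in>Lam \<inter> {real n..<real n+1}. f (x + y)) \<le> 96 / (real n)^3 + 1 / (real n)^3"
      using sum_split sF sC unfolding Ln_def by linarith
    also have "\<dots> = b n" unfolding b_def by (simp add: field_simps)
    finally show ?thesis .
  qed
  have "(\<Sum>\<^sub>\<infinity>y\<in>Lam. ennreal (f (x + y))) \<noteq> top"
    by (rule infsum_fin[OF Lam_nonneg finite_Lam _ sb b0 bnd]) (simp add: f_def pG.ff_nonneg)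
  then show ?thesis unfolding shift_sum_def f_def .
qed



theorem theorem3p1:
  shows "\<exists>L. discrete_nonneg_set L \<and> asymp_dense L \<and>
           (\<forall>G. open G \<longrightarrow> (\<exists>f\<in>C0_plus. divset f L = G))"
proof (intro exI conjI allI impI)
  show "discrete_nonneg_set Lam" by (rule discrete_Lam)
  show "asymp_dense Lam" by (rule dense_Lam)
  fix G :: "real set" assume oG: "open G"
  show "\<exists>f\<in>C0_plus. divset f Lam = G"
  proof (rule bexI[of _ "ff (phiG G)"])
    show "ff (phiG G) \<in> C0_plus"
      unfolding C0_plus_def using ff_cont[OF phiG_cont] pG.ff_nonneg pG.ff_tendsto by blast
    show "divset (ff (phiG G)) Lam = G"
      unfolding divset_def using shift_in_G[OF oG] shift_notin_G by blast
  qed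
qed


end
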